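(* Let $\Omega\subset\mathbb{R}^d$ be a bounded domain, let $k\ge 1$ be an integer, and for each $n\ge 1$ let $V_n$ denote the set of shallow $\mathrm{ReLU}^k$ neural network functions with $n$ neurons on $\Omega$, i.e. $$V_n=\Big\{\sum_{i=1}^n a_i\,\sigma_k(\boldsymbol{\omega}_i\cdot\boldsymbol{x}+b_i):\ a_i\in\mathbb{R},\ \boldsymbol{\omega}_i\in S^{d-1},\ b_i\in[c_1,c_2]\Big\}\subset H^1(\Omega).$$ Let $V$ be a compact subset of $H^1(\Omega)$. Then for every $\varepsilon>0$ there exists $n_0=n_0(\varepsilon,V)$ such that for every $v\in V$ and every $n>n_0$ there exists $\chi\in V_n$ with $\|v-\chi\|_{1}\le\varepsilon$.
   Context: $\sigma_k(t)=\max\{0,t\}^k$; $S^{d-1}=\{\boldsymbol{\omega}\in\mathbb{R}^d:|\boldsymbol{\omega}|=1\}$; the constants $c_1<c_2$ satisfy $c_1<\inf\{\boldsymbol{\omega}\cdot\boldsymbol{x}:\boldsymbol{x}\in\Omega,\boldsymbol{\omega}\in S^{d-1}\}$ and $\sup\{\boldsymbol{\omega}\cdot\boldsymbol{x}:\boldsymbol{x}\in\Omega,\boldsymbol{\omega}\in S^{d-1}\}<c_2$. $\|\cdot\|_1$ is the standard $H^1(\Omega)$ norm. (It is used that for every $u\in H^1(\Omega)$ and $\varepsilon>0$ there is some $n$ and some $\chi\in V_n$ with $\|u-\chi\|_1\le\varepsilon$.) *)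

theory Defs
  imports "HOL-Analysis.Analysis"
begin

definition relu_pow :: "nat \<Rightarrow> real \<Rightarrow> real" where
  "relu_pow k t = (max 0 t) ^ k"

definition pdir :: "'a::euclidean_space \<Rightarrow> ('a \<Rightarrow> real) \<Rightarrow> 'a \<Rightarrow> real" where
  "pdir i f x = frechet_derivative f (at x) i"

definition iter_pdir :: "'a::euclidean_space list \<Rightarrow> ('a \<Rightarrow> real) \<Rightarrow> 'a \<Rightarrow> real" where
  "iter_pdir js f = foldr pdir js f"

definition smooth_fun :: "('a::euclidean_space \<Rightarrow> real) \<Rightarrow> bool" where
  "smooth_fun f \<longleftrightarrow> (\<forall>js. set js \<subseteq> Basis \<longrightarrow> (\<forall>x. iter_pdir js f differentiable (at x)))"

definition test_fun :: "'a::euclidean_space set \<Rightarrow> ('a \<Rightarrow> real) \<Rightarrow> bool" where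
  "test_fun \<Omega> \<phi> \<longleftrightarrow> smooth_fun \<phi> \<and> compact (closure {x. \<phi> x \<noteq> 0})
      \<and> closure {x. \<phi> x \<noteq> 0} \<subseteq> \<Omega>"

definition L2_fun :: "'a::euclidean_space set \<Rightarrow> ('a \<Rightarrow> real) \<Rightarrow> bool" where
  "L2_fun \<Omega> u \<longleftrightarrow> u \<in> borel_measurable (lebesgue_on \<Omega>)
      \<and> integrable (lebesgue_on \<Omega>) (\<lambda>x. (u x)\<^sup>2)"

definition L2_vec :: "'a::euclidean_space set \<Rightarrow> ('a \<Rightarrow> 'a) \<Rightarrow> bool" where
  "L2_vec \<Omega> g \<longleftrightarrow> g \<in> borel_measurable (lebesgue_on \<Omega>)
      \<and> integrable (lebesgue_on \<Omega>) (\<lambda>x. (norm (g x))\<^sup>2)"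

definition weak_grad :: "'a::euclidean_space set \<Rightarrow> ('a \<Rightarrow> real) \<Rightarrow> ('a \<Rightarrow> 'a) \<Rightarrow> bool" where
  "weak_grad \<Omega> u g \<longleftrightarrow> (\<forall>\<phi>. test_fun \<Omega> \<phi> \<longrightarrow> (\<forall>i\<in>Basis.
      integrable (lebesgue_on \<Omega>) (\<lambda>x. u x * pdir i \<phi> x) \<and>
      integrable (lebesgue_on \<Omega>) (\<lambda>x. (g x \<bullet> i) * \<phi> x) \<and>
      (\<integral>x. u x * pdir i \<phi> x \<partial>lebesgue_on \<Omega>) = - (\<integral>x. (g x \<bullet> i) * \<phi> x \<partial>lebesgue_on \<Omega>)))"

text \<open>The Sobolev space H^1(Omega) (functions represented pointwise; only values on Omega matter).\<close>
definition H1 :: "'a::euclidean_space set \<Rightarrow> ('a \<Rightarrow> real) set" where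
  "H1 \<Omega> = {u. L2_fun \<Omega> u \<and> (\<exists>g. L2_vec \<Omega> g \<and> weak_grad \<Omega> u g)}"

definition wgrad :: "'a::euclidean_space set \<Rightarrow> ('a \<Rightarrow> real) \<Rightarrow> 'a \<Rightarrow> 'a" where
  "wgrad \<Omega> u = (SOME g. L2_vec \<Omega> g \<and> weak_grad \<Omega> u g)"

definition H1_norm :: "'a::euclidean_space set \<Rightarrow> ('a \<Rightarrow> real) \<Rightarrow> real" where
  "H1_norm \<Omega> u = sqrt ((\<integral>x. (u x)\<^sup>2 \<partial>lebesgue_on \<Omega>)
                      + (\<integral>x. (norm (wgrad \<Omega> u x))\<^sup>2 \<partial>lebesgue_on \<Omega>))"

text \<open>Compactness of a subset of H^1(Omega) w.r.t. the H^1 norm (sequential compactness,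
  equivalent to compactness in a (pseudo)metric space).\<close>
definition H1_compact :: "'a::euclidean_space set \<Rightarrow> ('a \<Rightarrow> real) set \<Rightarrow> bool" where
  "H1_compact \<Omega> V \<longleftrightarrow> V \<subseteq> H1 \<Omega> \<and>
     (\<forall>s. (\<forall>n. s n \<in> V) \<longrightarrow> (\<exists>l\<in>V. \<exists>r::nat \<Rightarrow> nat. strict_mono r \<and>
         (\<lambda>n. H1_norm \<Omega> (\<lambda>x. s (r n) x - l x)) \<longlonglongrightarrow> 0))"

definition relu_nets :: "nat \<Rightarrow> real \<Rightarrow> real \<Rightarrow> nat \<Rightarrow> ('a::euclidean_space \<Rightarrow> real) set" where
  "relu_nets k c1 c2 n = {\<psi>. \<exists>a w b. (\<forall>i<n. norm (w i) = 1 \<and> b i \<in> {c1..c2}) \<and>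
      \<psi> = (\<lambda>x. \<Sum>i<n. a i * relu_pow k (w i \<bullet> x + b i))}"

end

theory Submission
  imports Defs "HOL-Computational_Algebra.Polynomial"
begin

definition smooth1 :: "(real \<Rightarrow> real) \<Rightarrow> bool" where
  "smooth1 g \<longleftrightarrow> (\<exists>S. g \<in> S \<and> (\<forall>u\<in>S. \<exists>u'\<in>S. \<forall>t. (u has_real_derivative u' t) (at t)))"

lemma smooth1_exp: "smooth1 exp"
  unfolding smooth1_def by (rule exI[of _ "{exp}"]) (auto intro: DERIV_exp)

definition Ep :: "real poly \<Rightarrow> real \<Rightarrow> real" where
  "Ep p t = (if t > 0 then poly p (inverse t) * exp (- inverse t) else 0)"

lemma poly_exp_lim: "((\<lambda>s. s ^ k * poly p s / exp s) \<longlongrightarrow> (0::real)) at_top"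
proof (induction p arbitrary: k)
  case 0
  then show ?case by simp
next
  case (pCons a p)
  have "((\<lambda>s. a * (s ^ k / exp s) + s ^ Suc k * poly p s / exp s) \<longlongrightarrow> a * 0 + 0) at_top"
    by (intro tendsto_intros tendsto_power_div_exp_0 pCons.IH)
  moreover have "(\<lambda>s. a * (s ^ k / exp s) + s ^ Suc k * poly p s / exp s) = (\<lambda>s. s ^ k * poly (pCons a p) s / exp s)"
    by (auto simp: algebra_simps add_divide_distrib)
  ultimately show ?case by simp
qed

lemma Ep_deriv: "(Ep p has_real_derivative Ep ([:0,0,1:] * (p - pderiv p)) t) (at t)"
proof -
  consider "t > 0" | "t < 0" | "t = 0" by linarith
  then show ?thesis
  proof cases
    case 1
    have d: "((\<lambda>t. poly p (inverse t) * exp (- inverse t)) has_real_derivative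
       Ep ([:0,0,1:] * (p - pderiv p)) t) (at t)"
    proof -
      have "((\<lambda>t. poly p (inverse t) * exp (- inverse t)) has_real_derivative
         (poly (pderiv p) (inverse t) * (- inverse (t^2))) * exp (- inverse t) +
          poly p (inverse t) * (exp (- inverse t) * inverse (t^2))) (at t)"
        using 1
        by (auto intro!: derivative_eq_intros DERIV_chain2[OF poly_DERIV] simp: power2_eq_square)
      moreover have "(poly (pderiv p) (inverse t) * (- inverse (t^2))) * exp (- inverse t) +
          poly p (inverse t) * (exp (- inverse t) * inverse (t^2)) = Ep ([:0,0,1:] * (p - pderiv p)) t"
        using 1 by (simp add: Ep_def algebra_simps power2_eq_square)
      ultimately show ?thesis by simp
    qed
    show ?thesis
      apply (rule has_field_derivative_transform_within_open[OF d, of "{0<..}"])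
      using 1 by (auto simp: Ep_def)
  next
    case 2
    have d: "((\<lambda>t. 0) has_real_derivative Ep ([:0,0,1:] * (p - pderiv p)) t) (at t)"
      using 2 by (simp add: Ep_def)
    show ?thesis
      apply (rule has_field_derivative_transform_within_open[OF d, of "{..<0}"])
      using 2 by (auto simp: Ep_def)
  next
    case 3
    have r: "((\<lambda>h. (Ep p (0 + h) - Ep p 0) / h) \<longlongrightarrow> 0) (at_right 0)"
    proof -
      have "((\<lambda>h. (\<lambda>s. s ^ 1 * poly p s / exp s) (inverse h)) \<longlongrightarrow> 0) (at_right 0)"
        by (rule filterlim_compose[OF poly_exp_lim filterlim_inverse_at_top_right])
      then show ?thesis
        apply (rule Lim_transform_eventually)
        by (auto simp: eventually_at_right_less Ep_def exp_minus field_simps intro!: eventually_at_rightI[of 0 1])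
    qed
    have l: "((\<lambda>h. (Ep p (0 + h) - Ep p 0) / h) \<longlongrightarrow> 0) (at_left 0)"
      apply (rule Lim_transform_eventually[of "\<lambda>_. 0"])
      by (auto simp: Ep_def intro!: eventually_at_leftI[of "-1" 0])
    have "((\<lambda>h. (Ep p (0 + h) - Ep p 0) / h) \<longlongrightarrow> 0) (at 0)"
      using r l by (simp add: filterlim_split_at)
    then show ?thesis using 3 by (simp add: has_field_derivative_iff Ep_def)
  qed
qed

lemma smooth1_Ep: "smooth1 (Ep p)"
  unfolding smooth1_def
  by (rule exI[of _ "range Ep"]) (auto intro: Ep_deriv)

lemma Ep_pos: "Ep 1 t > 0 \<longleftrightarrow> t > 0" "Ep 1 t \<ge> 0"
  by (auto simp: Ep_def)



inductive_set SM :: "('a::euclidean_space \<Rightarrow> real) set" where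
  const: "(\<lambda>x. c) \<in> SM"
| lin: "(\<lambda>x. x \<bullet> w) \<in> SM"
| add: "f \<in> SM \<Longrightarrow> g \<in> SM \<Longrightarrow> (\<lambda>x. f x + g x) \<in> SM"
| mult: "f \<in> SM \<Longrightarrow> g \<in> SM \<Longrightarrow> (\<lambda>x. f x * g x) \<in> SM"
| comp: "smooth1 g \<Longrightarrow> f \<in> SM \<Longrightarrow> (\<lambda>x. g (f x)) \<in> SM"

lemma SM_deriv:
  assumes "f \<in> SM"
  shows "\<exists>D. (\<forall>x. (f has_derivative (\<lambda>v. D x \<bullet> v)) (at x)) \<and> (\<forall>i. (\<lambda>x. D x \<bullet> i) \<in> SM)"
  using assms
proof induction
  case (const c)
  show ?case by (rule exI[of _ "\<lambda>x. 0"]) (auto intro: SM.const)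
next
  case (lin w)
  show ?case
    by (rule exI[of _ "\<lambda>x. w"]) (auto intro!: derivative_eq_intros SM.const simp: inner_commute)
next
  case (add f g)
  then obtain Df Dg where f: "\<forall>x. (f has_derivative (\<lambda>v. Df x \<bullet> v)) (at x)" "\<forall>i. (\<lambda>x. Df x \<bullet> i) \<in> SM"
    and g: "\<forall>x. (g has_derivative (\<lambda>v. Dg x \<bullet> v)) (at x)" "\<forall>i. (\<lambda>x. Dg x \<bullet> i) \<in> SM" by blast
  show ?case
  proof (rule exI[of _ "\<lambda>x. Df x + Dg x"], intro conjI allI)
    fix x show "((\<lambda>x. f x + g x) has_derivative (\<lambda>v. (Df x + Dg x) \<bullet> v)) (at x)"
      using f g by (auto intro!: derivative_eq_intros simp: inner_add_left)
  next
    fix i show "(\<lambda>x. (Df x + Dg x) \<bullet> i) \<in> SM"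
      using f g SM.add[of "\<lambda>x. Df x \<bullet> i" "\<lambda>x. Dg x \<bullet> i"] by (simp add: inner_add_left)
  qed
next
  case (mult f g)
  then obtain Df Dg where f: "\<forall>x. (f has_derivative (\<lambda>v. Df x \<bullet> v)) (at x)" "\<forall>i. (\<lambda>x. Df x \<bullet> i) \<in> SM"
    and g: "\<forall>x. (g has_derivative (\<lambda>v. Dg x \<bullet> v)) (at x)" "\<forall>i. (\<lambda>x. Dg x \<bullet> i) \<in> SM" by blast
  show ?case
  proof (rule exI[of _ "\<lambda>x. f x *\<^sub>R Dg x + g x *\<^sub>R Df x"], intro conjI allI)
    fix x show "((\<lambda>x. f x * g x) has_derivative (\<lambda>v. (f x *\<^sub>R Dg x + g x *\<^sub>R Df x) \<bullet> v)) (at x)"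
      using f g by (auto intro!: derivative_eq_intros simp: inner_add_left algebra_simps)
  next
    fix i show "(\<lambda>x. (f x *\<^sub>R Dg x + g x *\<^sub>R Df x) \<bullet> i) \<in> SM"
      using f g mult.hyps SM.add[OF SM.mult[of f "\<lambda>x. Dg x \<bullet> i"] SM.mult[of g "\<lambda>x. Df x \<bullet> i"]]
      by (simp add: inner_add_left)
  qed
next
  case (comp g f)
  then obtain Df where f: "\<forall>x. (f has_derivative (\<lambda>v. Df x \<bullet> v)) (at x)" "\<forall>i. (\<lambda>x. Df x \<bullet> i) \<in> SM"
    by blast
  from comp.hyps(1) obtain S where S: "g \<in> S" "\<forall>u\<in>S. \<exists>u'\<in>S. \<forall>t. (u has_real_derivative u' t) (at t)"
    unfolding smooth1_def by blast
  then obtain g' where g': "g' \<in> S" "\<forall>t. (g has_real_derivative g' t) (at t)" by blast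
  have sg': "smooth1 g'" unfolding smooth1_def using S g' by blast
  show ?case
  proof (rule exI[of _ "\<lambda>x. g' (f x) *\<^sub>R Df x"], intro conjI allI)
    fix x
    have "((\<lambda>x. g (f x)) has_derivative (\<lambda>v. (\<lambda>h. h * g' (f x)) (Df x \<bullet> v))) (at x)"
      using has_derivative_compose[OF f(1)[rule_format, of x] g'(2)[rule_format, of "f x", unfolded has_field_derivative_def]]
      by (simp add: o_def mult.commute)
    then show "((\<lambda>x. g (f x)) has_derivative (\<lambda>v. (g' (f x) *\<^sub>R Df x) \<bullet> v)) (at x)"
      by (simp add: algebra_simps)
  next
    fix i show "(\<lambda>x. (g' (f x) *\<^sub>R Df x) \<bullet> i) \<in> SM"
      using SM.mult[OF SM.comp[OF sg' comp.hyps(2)] f(2)[rule_format, of i]] by simp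
  qed
qed

lemma SM_pdir: "f \<in> SM \<Longrightarrow> pdir i f \<in> SM"
proof -
  assume "f \<in> SM"
  then obtain D where D: "\<forall>x. (f has_derivative (\<lambda>v. D x \<bullet> v)) (at x)" "\<forall>i. (\<lambda>x. D x \<bullet> i) \<in> SM"
    using SM_deriv by blast
  have "pdir i f = (\<lambda>x. D x \<bullet> i)"
    unfolding pdir_def using D(1) frechet_derivative_at by (metis)
  then show ?thesis using D(2) by simp
qed

lemma SM_differentiable: "f \<in> SM \<Longrightarrow> f differentiable (at x)"
  using SM_deriv unfolding differentiable_def by blast

lemma SM_smooth: "f \<in> SM \<Longrightarrow> smooth_fun f"
proof -
  assume f: "f \<in> SM"
  have "iter_pdir js f \<in> SM" for js
    by (induction js) (auto simp: iter_pdir_def f SM_pdir)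
  then show ?thesis unfolding smooth_fun_def using SM_differentiable by blast
qed

lemma SM_prod: "finite I \<Longrightarrow> (\<And>i. i \<in> I \<Longrightarrow> f i \<in> SM) \<Longrightarrow> (\<lambda>x. \<Prod>i\<in>I. f i x) \<in> SM"
  by (induction I rule: finite_induct) (auto intro: SM.const SM.mult)



definition bumpP :: "'a::euclidean_space \<Rightarrow> 'a \<Rightarrow> 'a \<Rightarrow> real" where
  "bumpP c d x = (\<Prod>i\<in>Basis. Ep 1 ((x - c) \<bullet> i) * Ep 1 ((d - x) \<bullet> i))"

definition phi :: "nat \<Rightarrow> 'a::euclidean_space \<Rightarrow> 'a \<Rightarrow> 'a \<Rightarrow> real" where
  "phi m c d x = 1 - exp (- (real m * bumpP c d x))"

lemma bumpP_SM: "bumpP c d \<in> SM"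
proof -
  have 1: "(\<lambda>x. (x - c) \<bullet> i) \<in> SM" for i
    using SM.add[OF SM.lin[of i] SM.const[of "- (c \<bullet> i)"]] by (simp add: inner_diff_left)
  have 2: "(\<lambda>x. (d - x) \<bullet> i) \<in> SM" for i
    using SM.add[OF SM.lin[of "-i"] SM.const[of "d \<bullet> i"]] by (simp add: inner_diff_left)
  show ?thesis unfolding bumpP_def
    by (rule SM_prod) (auto intro!: SM.mult SM.comp[OF smooth1_Ep] 1 2)
qed

lemma phi_SM: "phi m c d \<in> SM"
proof -
  have "(\<lambda>x. 1 + (-1) * exp ((- real m) * bumpP c d x)) \<in> SM"
    by (intro SM.add SM.const SM.mult SM.comp[OF smooth1_exp] bumpP_SM)
  then show ?thesis unfolding phi_def[abs_def] by simp
qed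

lemma bumpP_pos: "bumpP c d x > 0 \<longleftrightarrow> x \<in> box c d"
proof
  assume "x \<in> box c d"
  then show "bumpP c d x > 0" unfolding bumpP_def
    by (intro prod_pos) (auto simp: mem_box Ep_pos inner_diff_left intro!: mult_pos_pos)
next
  assume a: "bumpP c d x > 0"
  have "(x - c) \<bullet> i > 0 \<and> (d - x) \<bullet> i > 0" if i: "i \<in> Basis" for i
  proof (rule ccontr)
    assume "\<not> ?thesis"
    then have "Ep 1 ((x - c) \<bullet> i) * Ep 1 ((d - x) \<bullet> i) = 0"
      by (auto simp: Ep_def)
    then have "bumpP c d x = 0" unfolding bumpP_def using i by (intro prod_zero) auto
    then show False using a by simp
  qed
  then show "x \<in> box c d" by (auto simp: mem_box inner_diff_left)
qed

lemma bumpP_nonneg: "bumpP c d x \<ge> 0"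
  unfolding bumpP_def by (intro prod_nonneg) (auto intro!: mult_nonneg_nonneg simp: Ep_pos)

lemma phi_support: "m > 0 \<Longrightarrow> {x. phi m c d x \<noteq> 0} = box c d"
proof -
  assume m: "m > 0"
  have "phi m c d x \<noteq> 0 \<longleftrightarrow> bumpP c d x \<noteq> 0" for x
    using m by (simp add: phi_def)
  moreover have "bumpP c d x \<noteq> 0 \<longleftrightarrow> x \<in> box c d" for x
    using bumpP_pos[of c d x] bumpP_nonneg[of c d x] by linarith
  ultimately show ?thesis by auto
qed

lemma phi_test: "m > 0 \<Longrightarrow> cbox c d \<subseteq> \<Omega> \<Longrightarrow> test_fun \<Omega> (phi m c d)"
proof -
  assume m: "m > 0" and sub: "cbox c d \<subseteq> \<Omega>"
  have cl: "closure (box c d) \<subseteq> cbox c d"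
    by (rule closure_minimal[OF box_subset_cbox closed_cbox])
  show ?thesis unfolding test_fun_def phi_support[OF m]
    using SM_smooth[OF phi_SM] cl sub by (auto simp: bounded_box)
qed

lemma phi_bounds: "0 \<le> phi m c d x" "phi m c d x \<le> 1"
  using bumpP_nonneg[of c d x] by (auto simp: phi_def)

lemma phi_lim: "(\<lambda>m. phi m c d x) \<longlonglongrightarrow> indicator (box c d) x"
proof (cases "x \<in> box c d")
  case True
  then have p: "bumpP c d x > 0" using bumpP_pos by blast
  have "(\<lambda>m. exp (- bumpP c d x) ^ m) \<longlonglongrightarrow> 0"
  proof (rule LIMSEQ_power_zero)
    have "exp (- bumpP c d x) < 1" using p by simp
    then show "norm (exp (- bumpP c d x)) < 1" by simp
  qed
  then have "(\<lambda>m. 1 - exp (- bumpP c d x) ^ m) \<longlonglongrightarrow> 1 - 0"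
    by (rule tendsto_diff[OF tendsto_const])
  moreover have "exp (- (real m * bumpP c d x)) = exp (- bumpP c d x) ^ m" for m
    by (metis exp_of_nat_mult mult_minus_right)
  ultimately show ?thesis using True by (simp add: phi_def)
next
  case False
  then have "bumpP c d x = 0" using bumpP_pos[of c d x] bumpP_nonneg[of c d x] by linarith
  then show ?thesis using False by (simp add: phi_def)
qed

lemma box_integral_zero:
  fixes h :: "'a::euclidean_space \<Rightarrow> real"
  assumes \<Omega>: "\<Omega> \<in> sets lebesgue" and hm: "h \<in> borel_measurable (lebesgue_on \<Omega>)"
    and hi: "integrable (lebesgue_on \<Omega>) h"
    and orth: "\<And>\<phi>. test_fun \<Omega> \<phi> \<Longrightarrow> (\<integral>x. h x * \<phi> x \<partial>lebesgue_on \<Omega>) = 0"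
    and sub: "cbox c d \<subseteq> \<Omega>"
  shows "(\<integral>x. h x * indicator (box c d) x \<partial>lebesgue_on \<Omega>) = 0"
proof -
  have cont: "continuous_on UNIV (phi m c d)" for m
    using SM_differentiable[OF phi_SM]
    by (meson continuous_at_imp_continuous_on differentiable_imp_continuous_within)
  have pm: "phi m c d \<in> borel_measurable (lebesgue_on \<Omega>)" for m
    using continuous_imp_measurable_on_sets_lebesgue[OF continuous_on_subset[OF cont[of m]] \<Omega>] by simp
  have "box c d \<in> sets lebesgue" by simp
  then have "indicator (box c d) \<in> borel_measurable (lebesgue :: 'a measure)"
    by (rule borel_measurable_indicator)
  then have im: "indicator (box c d) \<in> borel_measurable (lebesgue_on \<Omega>)"
    by (rule measurable_restrict_space1)
  have lim: "(\<lambda>m. integral\<^sup>L (lebesgue_on \<Omega>) (\<lambda>x. h x * phi (Suc m) c d x)) \<longlonglongrightarrow>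
      (\<integral>x. h x * indicator (box c d) x \<partial>lebesgue_on \<Omega>)"
  proof (rule integral_dominated_convergence[where w="\<lambda>x. norm (h x)"])
    show "(\<lambda>x. h x * indicator (box c d) x) \<in> borel_measurable (lebesgue_on \<Omega>)"
      using hm im by (rule borel_measurable_times)
    show "(\<lambda>x. h x * phi (Suc m) c d x) \<in> borel_measurable (lebesgue_on \<Omega>)" for m
      using hm pm[of "Suc m"] by (rule borel_measurable_times)
    show "integrable (lebesgue_on \<Omega>) (\<lambda>x. norm (h x))" using hi by simp
    show "AE x in lebesgue_on \<Omega>. (\<lambda>m. h x * phi (Suc m) c d x) \<longlonglongrightarrow> h x * indicator (box c d) x"
      by (intro AE_I2 tendsto_intros LIMSEQ_Suc[OF phi_lim])
    show "AE x in lebesgue_on \<Omega>. norm (h x * phi (Suc m) c d x) \<le> norm (h x)" for m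
      using phi_bounds[of "Suc m" c d] by (intro AE_I2) (auto simp: abs_mult intro: mult_left_le)
  qed
  have "integral\<^sup>L (lebesgue_on \<Omega>) (\<lambda>x. h x * phi (Suc m) c d x) = 0" for m
    using orth[OF phi_test[OF _ sub]] by simp
  with lim show ?thesis by (simp add: LIMSEQ_const_iff)
qed



lemma nn_pos_neg_eq:
  fixes F :: "'b \<Rightarrow> real"
  assumes "integrable M F" "integral\<^sup>L M F = 0"
  shows "(\<integral>\<^sup>+x. ennreal (F x) \<partial>M) = (\<integral>\<^sup>+x. ennreal (- F x) \<partial>M)"
proof -
  have f1: "(\<integral>\<^sup>+x. ennreal (F x) \<partial>M) \<noteq> \<infinity>" "(\<integral>\<^sup>+x. ennreal (- F x) \<partial>M) \<noteq> \<infinity>"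
    using assms(1) unfolding real_integrable_def by auto
  have "enn2real (\<integral>\<^sup>+x. ennreal (F x) \<partial>M) - enn2real (\<integral>\<^sup>+x. ennreal (- F x) \<partial>M) = 0"
    using real_lebesgue_integral_def[OF assms(1)] assms(2) by argo
  then have "ennreal (enn2real (\<integral>\<^sup>+x. ennreal (F x) \<partial>M)) = ennreal (enn2real (\<integral>\<^sup>+x. ennreal (- F x) \<partial>M))"
    by simp
  then show ?thesis using f1 unfolding ennreal_enn2real_if by (auto split: if_splits)
qed

lemma ae_zero_on_box:
  fixes G :: "'a::euclidean_space \<Rightarrow> real"
  assumes Gm: "G \<in> borel_measurable lborel" and Gi: "integrable lborel G"
    and box0: "\<And>c d. (\<integral>x. indicator (box a b) x * G x * indicator (box c d) x \<partial>lborel) = 0"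
  shows "AE x in lborel. x \<in> box a b \<longrightarrow> G x = 0"
proof -
  define f where "f x = indicator (box a b) x * G x" for x
  have fm: "f \<in> borel_measurable lborel" unfolding f_def using Gm by measurable
  have fi: "integrable lborel f" unfolding f_def
    using integrable_mult_indicator[of "box a b" lborel G] Gi by simp
  define M1 where "M1 = density lborel (\<lambda>x. ennreal (f x))"
  define M2 where "M2 = density lborel (\<lambda>x. ennreal (- f x))"
  have em1: "emeasure M1 X = (\<integral>\<^sup>+x. ennreal (f x * indicator X x) \<partial>lborel)" if "X \<in> sets borel" for X
    unfolding M1_def using that fm
    by (subst emeasure_density) (auto intro!: nn_integral_cong simp: indicator_def)
  have em2: "emeasure M2 X = (\<integral>\<^sup>+x. ennreal (- (f x * indicator X x)) \<partial>lborel)" if "X \<in> sets borel" for X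
    unfolding M2_def using that fm
    by (subst emeasure_density) (auto intro!: nn_integral_cong simp: indicator_def)
  have "M1 = M2"
  proof (rule measure_eqI_generator_eq[where E="range (\<lambda>(a, b). box a b)" and \<Omega>=UNIV
        and A="\<lambda>n::nat. box (- (real n *\<^sub>R One)) (real n *\<^sub>R One)"])
    show "Int_stable (range (\<lambda>(a, b). box a b :: 'a set))"
      by (auto simp: Int_stable_def box_Int_box)
    show "range (\<lambda>(a, b). box a b :: 'a set) \<subseteq> Pow UNIV" by simp
    show "sets M1 = sigma_sets UNIV (range (\<lambda>(a, b). box a b))"
      unfolding M1_def by (simp add: borel_eq_box)
    show "sets M2 = sigma_sets UNIV (range (\<lambda>(a, b). box a b))"
      unfolding M2_def by (simp add: borel_eq_box)
    show "range (\<lambda>n::nat. box (- (real n *\<^sub>R One)) (real n *\<^sub>R One)) \<subseteq> range (\<lambda>(a, b). box a b :: 'a set)"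
      by auto
    show "(\<Union>n::nat. box (- (real n *\<^sub>R One)) (real n *\<^sub>R One)) = (UNIV :: 'a set)"
      by (rule UN_box_eq_UNIV)
    fix X :: "'a set"
    assume "X \<in> range (\<lambda>(a, b). box a b)"
    then obtain c d where X: "X = box c d" by auto
    have "integrable lborel (\<lambda>x. f x * indicator X x)"
      using integrable_mult_indicator[of X lborel f] fi X by (simp add: mult.commute)
    moreover have "integral\<^sup>L lborel (\<lambda>x. f x * indicator X x) = 0"
      using box0[of c d] X by (simp add: f_def)
    ultimately show "emeasure M1 X = emeasure M2 X"
      using nn_pos_neg_eq[of lborel "\<lambda>x. f x * indicator X x"] em1 em2 X by simp
  next
    fix n :: nat
    have "emeasure M1 (box (- (real n *\<^sub>R One)) (real n *\<^sub>R One)) \<le> (\<integral>\<^sup>+x. ennreal (norm (f x)) \<partial>lborel)"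
      by (subst em1) (auto intro!: nn_integral_mono simp: indicator_def)
    also have "\<dots> < \<infinity>" using fi by (simp add: integrable_iff_bounded)
    finally show "emeasure M1 (box (- (real n *\<^sub>R One)) (real n *\<^sub>R One)) \<noteq> \<infinity>" by simp
  qed
  have pos: "AE x in lborel. f x \<le> 0"
  proof -
    have Xs: "{x. f x > 0} \<in> sets borel" using fm by measurable
    have "emeasure M2 {x. f x > 0} = 0"
      using em2[OF Xs] by (simp add: indicator_def ennreal_neg)
    then have "(\<integral>\<^sup>+x. ennreal (f x * indicator {x. f x > 0} x) \<partial>lborel) = 0"
      using em1[OF Xs] \<open>M1 = M2\<close> by simp
    moreover have "(\<lambda>x. ennreal (f x * indicator {x. f x > 0} x)) = (\<lambda>x. ennreal (f x))"
      by (auto simp: indicator_def fun_eq_iff ennreal_neg)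
    ultimately have "(\<integral>\<^sup>+x. ennreal (f x) \<partial>lborel) = 0" by simp
    then have "AE x in lborel. ennreal (f x) = 0"
      using fm by (subst (asm) nn_integral_0_iff_AE) auto
    then show ?thesis by eventually_elim (simp add: ennreal_eq_0_iff)
  qed
  have neg: "AE x in lborel. f x \<ge> 0"
  proof -
    have Xs: "{x. f x < 0} \<in> sets borel" using fm by measurable
    have "emeasure M1 {x. f x < 0} = 0"
      using em1[OF Xs] by (simp add: indicator_def ennreal_neg)
    then have "(\<integral>\<^sup>+x. ennreal (- (f x * indicator {x. f x < 0} x)) \<partial>lborel) = 0"
      using em2[OF Xs] \<open>M1 = M2\<close> by simp
    moreover have "(\<lambda>x. ennreal (- (f x * indicator {x. f x < 0} x))) = (\<lambda>x. ennreal (- f x))"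
      by (auto simp: indicator_def fun_eq_iff ennreal_neg)
    ultimately have "(\<integral>\<^sup>+x. ennreal (- f x) \<partial>lborel) = 0" by simp
    then have "AE x in lborel. ennreal (- f x) = 0"
      using fm by (subst (asm) nn_integral_0_iff_AE) auto
    then show ?thesis by eventually_elim (simp add: ennreal_eq_0_iff)
  qed
  from pos neg show ?thesis
    by eventually_elim (auto simp: f_def)
qed




lemma ae_zero_from_boxes:
  fixes h :: "'a::euclidean_space \<Rightarrow> real"
  assumes \<Omega>: "open \<Omega>" and hi: "integrable (lebesgue_on \<Omega>) h"
    and box0: "\<And>c d. cbox c d \<subseteq> \<Omega> \<Longrightarrow> (\<integral>x. h x * indicator (box c d) x \<partial>lebesgue_on \<Omega>) = 0"
  shows "AE x in lebesgue_on \<Omega>. h x = 0"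
proof -
  have \<Omega>s: "\<Omega> \<in> sets lebesgue"
    using \<Omega> by (metis borel_open sets_completionI_sets sets_lborel)
  define H where "H x = indicator \<Omega> x * h x" for x
  have Hi: "integrable lebesgue H"
    using integrable_restrict_space[of \<Omega> lebesgue h] \<Omega>s hi by (simp add: H_def[abs_def])
  then have Hm: "H \<in> borel_measurable lebesgue" by (rule borel_measurable_integrable)
  obtain G where Gm: "G \<in> borel_measurable lborel" and HG: "AE x in lborel. H x = G x"
    using completion_ex_borel_measurable_real[of H lborel] Hm by blast
  have HGc: "AE x in lebesgue. H x = G x" using HG by (rule AE_completion)
  have Gmc: "G \<in> borel_measurable lebesgue" using Gm by (rule measurable_completion)
  have Gic: "integrable lebesgue G"
    using integrable_cong_AE[OF Hm Gmc HGc] Hi by simp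
  have Gi: "integrable lborel G"
    using Gic integrable_completion[OF Gm] by simp
  have box0G: "(\<integral>x. G x * indicator (box c d) x \<partial>lborel) = 0" if cd: "cbox c d \<subseteq> \<Omega>" for c d
  proof -
    have im: "indicator (box c d) \<in> borel_measurable (lborel :: 'a measure)" by simp
    have "(\<integral>x. G x * indicator (box c d) x \<partial>lborel) = (\<integral>x. G x * indicator (box c d) x \<partial>lebesgue)"
      by (rule integral_completion[symmetric]) (use Gm im in measurable)
    also have "\<dots> = (\<integral>x. H x * indicator (box c d) x \<partial>lebesgue)"
      by (rule integral_cong_AE) (use HGc Gmc Hm in \<open>auto elim!: eventually_mono intro!: borel_measurable_times measurable_completion[OF im]\<close>)
    also have "\<dots> = (\<integral>x. h x * indicator (box c d) x \<partial>lebesgue_on \<Omega>)"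
      using integral_restrict_space[of \<Omega> lebesgue "\<lambda>x. h x * indicator (box c d) x"] \<Omega>s
      by (simp add: H_def mult.assoc)
    also have "\<dots> = 0" using box0[OF cd] .
    finally show ?thesis .
  qed
  have aebox: "AE x in lborel. x \<in> cbox a b \<longrightarrow> G x = 0" if ab: "cbox a b \<subseteq> \<Omega>" for a b
  proof -
    have "AE x in lborel. x \<in> box a b \<longrightarrow> G x = 0"
    proof (rule ae_zero_on_box[OF Gm Gi])
      fix c d :: 'a
      define p where "p = (\<Sum>i\<in>Basis. max (a\<bullet>i) (c\<bullet>i) *\<^sub>R i)"
      define q where "q = (\<Sum>i\<in>Basis. min (b\<bullet>i) (d\<bullet>i) *\<^sub>R i)"
      have pq: "box a b \<inter> box c d = box p q" unfolding p_def q_def by (rule box_Int_box)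
      have "cbox p q \<subseteq> cbox a b"
        unfolding p_def q_def by (auto simp: mem_box)
      then have sub: "cbox p q \<subseteq> \<Omega>" using ab by blast
      have "(\<lambda>x. indicator (box a b) x * G x * indicator (box c d) x) = (\<lambda>x. G x * indicator (box p q) x)"
        by (auto simp: fun_eq_iff indicator_def pq[symmetric])
      then show "(\<integral>x. indicator (box a b) x * G x * indicator (box c d) x \<partial>lborel) = 0"
        using box0G[OF sub] by simp
    qed
    moreover have "AE x in lborel. x \<notin> cbox a b - box a b"
      by (rule AE_not_in[OF null_sets_cbox_Diff_box])
    ultimately show ?thesis by eventually_elim auto
  qed
  obtain \<D> where D: "countable \<D>" "\<D> \<subseteq> Pow \<Omega>" "\<And>X. X \<in> \<D> \<Longrightarrow> \<exists>a b. X = cbox a b" "\<Union>\<D> = \<Omega>"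
    using open_countable_Union_open_cbox[OF \<Omega>] by metis
  have "\<forall>X\<in>\<D>. AE x in lborel. x \<in> X \<longrightarrow> G x = 0"
  proof
    fix X assume X: "X \<in> \<D>"
    then obtain a b where "X = cbox a b" using D(3) by blast
    then show "AE x in lborel. x \<in> X \<longrightarrow> G x = 0" using aebox D(2) X by blast
  qed
  then have "AE x in lborel. \<forall>X\<in>\<D>. x \<in> X \<longrightarrow> G x = 0"
    by (subst AE_ball_countable[OF D(1)])
  then have "AE x in lborel. x \<in> \<Omega> \<longrightarrow> G x = 0"
    by eventually_elim (use D(4) in blast)
  then have "AE x in lebesgue. x \<in> \<Omega> \<longrightarrow> G x = 0" by (rule AE_completion)
  with HGc have "AE x in lebesgue. x \<in> \<Omega> \<longrightarrow> h x = 0"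
    by eventually_elim (auto simp: H_def)
  then show ?thesis
    using AE_restrict_space_iff[of \<Omega> lebesgue] \<Omega>s by simp
qed



lemma cs_real_aux:
  fixes A B C :: real
  assumes A: "A \<ge> 0" and B: "B \<ge> 0" and H: "\<And>t. t > 0 \<Longrightarrow> 2 * C \<le> t * A + B / t"
  shows "C \<le> sqrt A * sqrt B"
proof (cases "A > 0 \<and> B > 0")
  case True
  have "2 * C \<le> (sqrt B / sqrt A) * A + B / (sqrt B / sqrt A)"
    using H[of "sqrt B / sqrt A"] True by simp
  also have "\<dots> = 2 * (sqrt A * sqrt B)"
    using True
    by (simp add: field_simps)
  finally show ?thesis by simp
next
  case False
  then have "A = 0 \<or> B = 0" using A B by linarith
  then show ?thesis
  proof
    assume A0: "A = 0"
    show ?thesis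
    proof (rule ccontr)
      assume "\<not> ?thesis"
      then have C: "C > 0" using A0 by simp
      have "2 * C \<le> B / ((B + 1) / C)" using H[of "(B + 1) / C"] C B A0 by simp
      also have "\<dots> = B * C / (B + 1)" using C B by (simp add: field_simps)
      also have "\<dots> < C" using C B by (simp add: field_simps)
      finally show False using C by simp
    qed
  next
    assume B0: "B = 0"
    show ?thesis
    proof (rule ccontr)
      assume "\<not> ?thesis"
      then have C: "C > 0" using B0 by simp
      have "2 * C \<le> (C / (A + 1)) * A" using H[of "C / (A + 1)"] C A B0 by simp
      also have "\<dots> < C" using C A by (simp add: field_simps)
      finally show False using C by simp
    qed
  qed
qed

lemma ab_sq: "(a::real) \<ge> 0 \<Longrightarrow> b \<ge> 0 \<Longrightarrow> a * b \<le> a\<^sup>2 + b\<^sup>2"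
  by (metis add_increasing add_increasing2 mult_mono nle_le power2_eq_square zero_le_power2)

lemma minkowski_L2:
  fixes f g :: "'b \<Rightarrow> 'c::euclidean_space"
  assumes fm: "f \<in> borel_measurable M" and gm: "g \<in> borel_measurable M"
    and fi: "integrable M (\<lambda>x. (norm (f x))\<^sup>2)" and gi: "integrable M (\<lambda>x. (norm (g x))\<^sup>2)"
  shows "integrable M (\<lambda>x. (norm (f x + g x))\<^sup>2)"
    and "sqrt (\<integral>x. (norm (f x + g x))\<^sup>2 \<partial>M) \<le> sqrt (\<integral>x. (norm (f x))\<^sup>2 \<partial>M) + sqrt (\<integral>x. (norm (g x))\<^sup>2 \<partial>M)"
proof -
  define A where "A = (\<integral>x. (norm (f x))\<^sup>2 \<partial>M)"
  define B where "B = (\<integral>x. (norm (g x))\<^sup>2 \<partial>M)"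
  define C where "C = (\<integral>x. f x \<bullet> g x \<partial>M)"
  have A0: "A \<ge> 0" unfolding A_def by simp
  have B0: "B \<ge> 0" unfolding B_def by simp
  have ipm: "(\<lambda>x. f x \<bullet> g x) \<in> borel_measurable M" using fm gm by measurable
  have ip_bound: "\<bar>f x \<bullet> g x\<bar> \<le> (norm (f x))\<^sup>2 + (norm (g x))\<^sup>2" for x
  proof -
    have "\<bar>f x \<bullet> g x\<bar> \<le> norm (f x) * norm (g x)" by (rule Cauchy_Schwarz_ineq2)
    also have "\<dots> \<le> (norm (f x))\<^sup>2 + (norm (g x))\<^sup>2"
      using ab_sq[OF norm_ge_zero norm_ge_zero] .
    finally show ?thesis .
  qed
  have ipi: "integrable M (\<lambda>x. f x \<bullet> g x)"
    by (rule Bochner_Integration.integrable_bound[OF Bochner_Integration.integrable_add[OF fi gi] ipm]) (auto intro!: AE_I2 order.trans[OF ip_bound])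
  have expand: "(norm (f x + g x))\<^sup>2 = (norm (f x))\<^sup>2 + 2 * (f x \<bullet> g x) + (norm (g x))\<^sup>2" for x
    by (simp add: power2_norm_eq_inner inner_add_left inner_add_right inner_commute)
  show int: "integrable M (\<lambda>x. (norm (f x + g x))\<^sup>2)"
    unfolding expand using fi gi ipi by auto
  have I: "(\<integral>x. (norm (f x + g x))\<^sup>2 \<partial>M) = A + 2 * C + B"
    unfolding expand A_def B_def C_def using fi gi ipi by simp
  have "2 * C \<le> t * A + B / t" if t: "t > 0" for t
  proof -
    have pw: "2 * (f x \<bullet> g x) \<le> t * (norm (f x))\<^sup>2 + (norm (g x))\<^sup>2 / t" for x
    proof -
      have "0 \<le> (norm (t *\<^sub>R f x - g x))\<^sup>2 / t" using t by simp
      also have "(norm (t *\<^sub>R f x - g x))\<^sup>2 = t\<^sup>2 * (norm (f x))\<^sup>2 - 2 * t * (f x \<bullet> g x) + (norm (g x))\<^sup>2"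
        unfolding power2_norm_eq_inner by (simp add: inner_diff_left inner_diff_right inner_commute power2_eq_square algebra_simps)
      also have "(t\<^sup>2 * (norm (f x))\<^sup>2 - 2 * t * (f x \<bullet> g x) + (norm (g x))\<^sup>2) / t = t * (norm (f x))\<^sup>2 - 2 * (f x \<bullet> g x) + (norm (g x))\<^sup>2 / t"
        using t by (simp add: field_simps power2_eq_square)
      finally show ?thesis by simp
    qed
    have "2 * C = (\<integral>x. 2 * (f x \<bullet> g x) \<partial>M)" unfolding C_def by simp
    also have "\<dots> \<le> (\<integral>x. t * (norm (f x))\<^sup>2 + (norm (g x))\<^sup>2 / t \<partial>M)"
      by (rule integral_mono) (use fi gi ipi pw in auto)
    also have "\<dots> = t * A + B / t" unfolding A_def B_def using fi gi by simp
    finally show ?thesis .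
  qed
  then have "C \<le> sqrt A * sqrt B" by (rule cs_real_aux[OF A0 B0])
  then have "A + 2 * C + B \<le> (sqrt A + sqrt B)\<^sup>2"
    using A0 B0 by (simp add: power2_sum)
  then have "sqrt (A + 2 * C + B) \<le> sqrt A + sqrt B"
    by (simp add: real_le_lsqrt A0 B0)
  then show "sqrt (\<integral>x. (norm (f x + g x))\<^sup>2 \<partial>M) \<le> sqrt (\<integral>x. (norm (f x))\<^sup>2 \<partial>M) + sqrt (\<integral>x. (norm (g x))\<^sup>2 \<partial>M)"
    using I A_def B_def by simp
qed

lemma sqrt2_tri:
  fixes p q x1 x2 y1 y2 :: real
  assumes "0 \<le> p" "p \<le> x1 + y1" "0 \<le> q" "q \<le> x2 + y2" "0 \<le> x1" "0 \<le> x2" "0 \<le> y1" "0 \<le> y2"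
  shows "sqrt (p\<^sup>2 + q\<^sup>2) \<le> sqrt (x1\<^sup>2 + x2\<^sup>2) + sqrt (y1\<^sup>2 + y2\<^sup>2)"
proof -
  have "sqrt (p\<^sup>2 + q\<^sup>2) \<le> sqrt ((x1 + y1)\<^sup>2 + (x2 + y2)\<^sup>2)"
    using assms by (intro real_sqrt_le_mono add_mono power_mono) auto
  also have "\<dots> = norm ((x1, x2) + (y1, y2))" by (simp add: norm_Pair)
  also have "\<dots> \<le> norm (x1, x2) + norm (y1, y2)" by (rule norm_triangle_ineq)
  also have "\<dots> = sqrt (x1\<^sup>2 + x2\<^sup>2) + sqrt (y1\<^sup>2 + y2\<^sup>2)" by (simp add: norm_Pair)
  finally show ?thesis .
qed



lemma open_sets_lebesgue: "open \<Omega> \<Longrightarrow> \<Omega> \<in> sets lebesgue"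
  by (metis borel_open sets_completionI_sets sets_lborel)

lemma finite_lebesgue_on:
  assumes "open \<Omega>" "bounded \<Omega>"
  shows "finite_measure (lebesgue_on \<Omega>)"
proof (rule finite_measureI)
  have "\<Omega> \<in> lmeasurable" using lmeasurable_open assms by blast
  then have "emeasure lebesgue \<Omega> \<noteq> top" by (rule fmeasurableD2)
  then show "emeasure (lebesgue_on \<Omega>) (space (lebesgue_on \<Omega>)) \<noteq> \<infinity>"
    using open_sets_lebesgue[OF assms(1)] by (simp add: emeasure_restrict_space space_restrict_space)
qed

lemma L2_vec_imp_L1:
  assumes "open \<Omega>" "bounded \<Omega>" "L2_vec \<Omega> g"
  shows "integrable (lebesgue_on \<Omega>) g"
proof -
  interpret finite_measure "lebesgue_on \<Omega>" by (rule finite_lebesgue_on[OF assms(1,2)])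
  have gm: "g \<in> borel_measurable (lebesgue_on \<Omega>)" using assms(3) unfolding L2_vec_def by blast
  have "integrable (lebesgue_on \<Omega>) (\<lambda>x. norm (g x))"
    by (rule square_integrable_imp_integrable) (use assms(3) gm in \<open>auto simp: L2_vec_def\<close>)
  then show ?thesis using integrable_norm_iff[OF gm] by simp
qed

lemma L2_fun_imp_L1:
  assumes "open \<Omega>" "bounded \<Omega>" "L2_fun \<Omega> u"
  shows "integrable (lebesgue_on \<Omega>) u"
proof -
  interpret finite_measure "lebesgue_on \<Omega>" by (rule finite_lebesgue_on[OF assms(1,2)])
  show ?thesis
    by (rule square_integrable_imp_integrable) (use assms(3) in \<open>auto simp: L2_fun_def\<close>)
qed

lemma weak_grad_unique:
  fixes g1 g2 :: "'a::euclidean_space \<Rightarrow> 'a"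
  assumes \<Omega>: "open \<Omega>" "bounded \<Omega>"
    and L: "L2_vec \<Omega> g1" "L2_vec \<Omega> g2" and W: "weak_grad \<Omega> u g1" "weak_grad \<Omega> u g2"
  shows "AE x in lebesgue_on \<Omega>. g1 x = g2 x"
proof -
  have \<Omega>s: "\<Omega> \<in> sets lebesgue" using open_sets_lebesgue[OF \<Omega>(1)] .
  have gi: "integrable (lebesgue_on \<Omega>) (\<lambda>x. g1 x - g2 x)"
    using L2_vec_imp_L1[OF \<Omega> L(1)] L2_vec_imp_L1[OF \<Omega> L(2)] by auto
  have "AE x in lebesgue_on \<Omega>. (g1 x - g2 x) \<bullet> i = 0" if i: "i \<in> Basis" for i
  proof (rule ae_zero_from_boxes[OF \<Omega>(1)])
    show hi: "integrable (lebesgue_on \<Omega>) (\<lambda>x. (g1 x - g2 x) \<bullet> i)"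
      using gi by auto
    fix c d :: 'a assume cd: "cbox c d \<subseteq> \<Omega>"
    show "(\<integral>x. (g1 x - g2 x) \<bullet> i * indicator (box c d) x \<partial>lebesgue_on \<Omega>) = 0"
    proof (rule box_integral_zero[OF \<Omega>s borel_measurable_integrable[OF hi] hi _ cd])
      fix \<phi> :: "'a \<Rightarrow> real" assume \<phi>: "test_fun \<Omega> \<phi>"
      from W(1) \<phi> i have w1: "integrable (lebesgue_on \<Omega>) (\<lambda>x. (g1 x \<bullet> i) * \<phi> x)"
        "(\<integral>x. u x * pdir i \<phi> x \<partial>lebesgue_on \<Omega>) = - (\<integral>x. (g1 x \<bullet> i) * \<phi> x \<partial>lebesgue_on \<Omega>)"
        unfolding weak_grad_def by blast+
      from W(2) \<phi> i have w2: "integrable (lebesgue_on \<Omega>) (\<lambda>x. (g2 x \<bullet> i) * \<phi> x)"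
        "(\<integral>x. u x * pdir i \<phi> x \<partial>lebesgue_on \<Omega>) = - (\<integral>x. (g2 x \<bullet> i) * \<phi> x \<partial>lebesgue_on \<Omega>)"
        unfolding weak_grad_def by blast+
      have "(\<integral>x. (g1 x - g2 x) \<bullet> i * \<phi> x \<partial>lebesgue_on \<Omega>) =
          (\<integral>x. (g1 x \<bullet> i) * \<phi> x - (g2 x \<bullet> i) * \<phi> x \<partial>lebesgue_on \<Omega>)"
        by (simp add: inner_diff_left algebra_simps)
      also have "\<dots> = (\<integral>x. (g1 x \<bullet> i) * \<phi> x \<partial>lebesgue_on \<Omega>) - (\<integral>x. (g2 x \<bullet> i) * \<phi> x \<partial>lebesgue_on \<Omega>)"
        using w1(1) w2(1) by (rule Bochner_Integration.integral_diff)
      also have "\<dots> = 0" using w1(2) w2(2) by simp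
      finally show "(\<integral>x. (g1 x - g2 x) \<bullet> i * \<phi> x \<partial>lebesgue_on \<Omega>) = 0" .
    qed
  qed
  then have "AE x in lebesgue_on \<Omega>. \<forall>i\<in>Basis. (g1 x - g2 x) \<bullet> i = 0"
    by (intro AE_finite_allI) auto
  then show ?thesis
    by eventually_elim (metis euclidean_eqI inner_zero_left eq_iff_diff_eq_0)
qed

lemma wgrad_spec: "u \<in> H1 \<Omega> \<Longrightarrow> L2_vec \<Omega> (wgrad \<Omega> u) \<and> weak_grad \<Omega> u (wgrad \<Omega> u)"
proof -
  assume "u \<in> H1 \<Omega>"
  then have "\<exists>g. L2_vec \<Omega> g \<and> weak_grad \<Omega> u g" unfolding H1_def by blast
  then show ?thesis unfolding wgrad_def by (rule someI_ex)
qed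

lemma H1_norm_eq:
  assumes \<Omega>: "open \<Omega>" "bounded \<Omega>" and g: "L2_vec \<Omega> g" "weak_grad \<Omega> u g"
  shows "H1_norm \<Omega> u = sqrt ((\<integral>x. (u x)\<^sup>2 \<partial>lebesgue_on \<Omega>) + (\<integral>x. (norm (g x))\<^sup>2 \<partial>lebesgue_on \<Omega>))"
proof -
  have "\<exists>g. L2_vec \<Omega> g \<and> weak_grad \<Omega> u g" using g by blast
  then have "L2_vec \<Omega> (wgrad \<Omega> u) \<and> weak_grad \<Omega> u (wgrad \<Omega> u)"
    unfolding wgrad_def by (rule someI_ex)
  then have w: "L2_vec \<Omega> (wgrad \<Omega> u)" "weak_grad \<Omega> u (wgrad \<Omega> u)" by auto
  have ae: "AE x in lebesgue_on \<Omega>. wgrad \<Omega> u x = g x"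
    by (rule weak_grad_unique[OF \<Omega> w(1) g(1) w(2) g(2)])
  have "(\<integral>x. (norm (wgrad \<Omega> u x))\<^sup>2 \<partial>lebesgue_on \<Omega>) = (\<integral>x. (norm (g x))\<^sup>2 \<partial>lebesgue_on \<Omega>)"
    by (rule integral_cong_AE) (use w(1) g(1) ae in \<open>auto simp: L2_vec_def elim: eventually_mono\<close>)
  then show ?thesis unfolding H1_norm_def by simp
qed

lemma L2_fun_add:
  assumes "L2_fun \<Omega> u" "L2_fun \<Omega> w"
  shows "L2_fun \<Omega> (\<lambda>x. u x + w x)"
  using assms minkowski_L2(1)[of u "lebesgue_on \<Omega>" w] unfolding L2_fun_def by auto

lemma L2_fun_diff:
  assumes "L2_fun \<Omega> u" "L2_fun \<Omega> w"
  shows "L2_fun \<Omega> (\<lambda>x. u x - w x)"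
  using assms minkowski_L2(1)[of u "lebesgue_on \<Omega>" "\<lambda>x. - w x"] unfolding L2_fun_def by auto

lemma L2_vec_add:
  assumes "L2_vec \<Omega> u" "L2_vec \<Omega> w"
  shows "L2_vec \<Omega> (\<lambda>x. u x + w x)"
  using assms minkowski_L2(1)[of u "lebesgue_on \<Omega>" w] unfolding L2_vec_def by auto

lemma L2_vec_diff:
  assumes "L2_vec \<Omega> u" "L2_vec \<Omega> w"
  shows "L2_vec \<Omega> (\<lambda>x. u x - w x)"
  using assms minkowski_L2(1)[of u "lebesgue_on \<Omega>" "\<lambda>x. - w x"] unfolding L2_vec_def by auto

lemma weak_grad_add:
  fixes u w :: "'a::euclidean_space \<Rightarrow> real"
  assumes "weak_grad \<Omega> u g1" "weak_grad \<Omega> w g2"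
  shows "weak_grad \<Omega> (\<lambda>x. u x + w x) (\<lambda>x. g1 x + g2 x)"
  unfolding weak_grad_def
proof (intro allI impI ballI conjI)
  fix \<phi> :: "'a \<Rightarrow> real" and i :: 'a assume \<phi>: "test_fun \<Omega> \<phi>" and i: "i \<in> Basis"
  from assms(1) \<phi> i have a: "integrable (lebesgue_on \<Omega>) (\<lambda>x. u x * pdir i \<phi> x)"
    "integrable (lebesgue_on \<Omega>) (\<lambda>x. (g1 x \<bullet> i) * \<phi> x)"
    "(\<integral>x. u x * pdir i \<phi> x \<partial>lebesgue_on \<Omega>) = - (\<integral>x. (g1 x \<bullet> i) * \<phi> x \<partial>lebesgue_on \<Omega>)"
    unfolding weak_grad_def by blast+
  from assms(2) \<phi> i have b: "integrable (lebesgue_on \<Omega>) (\<lambda>x. w x * pdir i \<phi> x)"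
    "integrable (lebesgue_on \<Omega>) (\<lambda>x. (g2 x \<bullet> i) * \<phi> x)"
    "(\<integral>x. w x * pdir i \<phi> x \<partial>lebesgue_on \<Omega>) = - (\<integral>x. (g2 x \<bullet> i) * \<phi> x \<partial>lebesgue_on \<Omega>)"
    unfolding weak_grad_def by blast+
  have e1: "(\<lambda>x. (u x + w x) * pdir i \<phi> x) = (\<lambda>x. u x * pdir i \<phi> x + w x * pdir i \<phi> x)"
    by (simp add: algebra_simps)
  have e2: "(\<lambda>x. ((g1 x + g2 x) \<bullet> i) * \<phi> x) = (\<lambda>x. (g1 x \<bullet> i) * \<phi> x + (g2 x \<bullet> i) * \<phi> x)"
    by (simp add: algebra_simps inner_add_left)
  show "integrable (lebesgue_on \<Omega>) (\<lambda>x. (u x + w x) * pdir i \<phi> x)"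
    unfolding e1 using a(1) b(1) by (rule Bochner_Integration.integrable_add)
  show "integrable (lebesgue_on \<Omega>) (\<lambda>x. ((g1 x + g2 x) \<bullet> i) * \<phi> x)"
    unfolding e2 using a(2) b(2) by (rule Bochner_Integration.integrable_add)
  show "(\<integral>x. (u x + w x) * pdir i \<phi> x \<partial>lebesgue_on \<Omega>) = - (\<integral>x. ((g1 x + g2 x) \<bullet> i) * \<phi> x \<partial>lebesgue_on \<Omega>)"
    unfolding e1 e2 Bochner_Integration.integral_add[OF a(1) b(1)] Bochner_Integration.integral_add[OF a(2) b(2)]
    using a(3) b(3) by simp
qed

lemma weak_grad_diff:
  fixes u w :: "'a::euclidean_space \<Rightarrow> real"
  assumes "weak_grad \<Omega> u g1" "weak_grad \<Omega> w g2"
  shows "weak_grad \<Omega> (\<lambda>x. u x - w x) (\<lambda>x. g1 x - g2 x)"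
  unfolding weak_grad_def
proof (intro allI impI ballI conjI)
  fix \<phi> :: "'a \<Rightarrow> real" and i :: 'a assume \<phi>: "test_fun \<Omega> \<phi>" and i: "i \<in> Basis"
  from assms(1) \<phi> i have a: "integrable (lebesgue_on \<Omega>) (\<lambda>x. u x * pdir i \<phi> x)"
    "integrable (lebesgue_on \<Omega>) (\<lambda>x. (g1 x \<bullet> i) * \<phi> x)"
    "(\<integral>x. u x * pdir i \<phi> x \<partial>lebesgue_on \<Omega>) = - (\<integral>x. (g1 x \<bullet> i) * \<phi> x \<partial>lebesgue_on \<Omega>)"
    unfolding weak_grad_def by blast+
  from assms(2) \<phi> i have b: "integrable (lebesgue_on \<Omega>) (\<lambda>x. w x * pdir i \<phi> x)"
    "integrable (lebesgue_on \<Omega>) (\<lambda>x. (g2 x \<bullet> i) * \<phi> x)"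
    "(\<integral>x. w x * pdir i \<phi> x \<partial>lebesgue_on \<Omega>) = - (\<integral>x. (g2 x \<bullet> i) * \<phi> x \<partial>lebesgue_on \<Omega>)"
    unfolding weak_grad_def by blast+
  have e1: "(\<lambda>x. (u x - w x) * pdir i \<phi> x) = (\<lambda>x. u x * pdir i \<phi> x - w x * pdir i \<phi> x)"
    by (simp add: algebra_simps)
  have e2: "(\<lambda>x. ((g1 x - g2 x) \<bullet> i) * \<phi> x) = (\<lambda>x. (g1 x \<bullet> i) * \<phi> x - (g2 x \<bullet> i) * \<phi> x)"
    by (simp add: algebra_simps inner_diff_left)
  show "integrable (lebesgue_on \<Omega>) (\<lambda>x. (u x - w x) * pdir i \<phi> x)"
    unfolding e1 using a(1) b(1) by (rule Bochner_Integration.integrable_diff)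
  show "integrable (lebesgue_on \<Omega>) (\<lambda>x. ((g1 x - g2 x) \<bullet> i) * \<phi> x)"
    unfolding e2 using a(2) b(2) by (rule Bochner_Integration.integrable_diff)
  show "(\<integral>x. (u x - w x) * pdir i \<phi> x \<partial>lebesgue_on \<Omega>) = - (\<integral>x. ((g1 x - g2 x) \<bullet> i) * \<phi> x \<partial>lebesgue_on \<Omega>)"
    unfolding e1 e2 Bochner_Integration.integral_diff[OF a(1) b(1)] Bochner_Integration.integral_diff[OF a(2) b(2)]
    using a(3) b(3) by simp
qed

lemma H1_add: "u \<in> H1 \<Omega> \<Longrightarrow> w \<in> H1 \<Omega> \<Longrightarrow> (\<lambda>x. u x + w x) \<in> H1 \<Omega>"
  unfolding H1_def using L2_fun_add L2_vec_add weak_grad_add by blast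

lemma H1_diff: "u \<in> H1 \<Omega> \<Longrightarrow> w \<in> H1 \<Omega> \<Longrightarrow> (\<lambda>x. u x - w x) \<in> H1 \<Omega>"
  unfolding H1_def using L2_fun_diff L2_vec_diff weak_grad_diff by blast



lemma nets_mono:
  assumes c: "c1 \<le> c2" and mn: "m \<le> n"
  shows "relu_nets k c1 c2 m \<subseteq> (relu_nets k c1 c2 n :: ('a::euclidean_space \<Rightarrow> real) set)"
proof
  fix \<psi> :: "'a \<Rightarrow> real" assume "\<psi> \<in> relu_nets k c1 c2 m"
  then obtain a w b where wb: "\<forall>i<m. norm (w i) = 1 \<and> b i \<in> {c1..c2}"
    and \<psi>: "\<psi> = (\<lambda>x. \<Sum>i<m. a i * relu_pow k (w i \<bullet> x + b i))"
    unfolding relu_nets_def by blast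
  obtain e :: 'a where e: "e \<in> Basis" using nonempty_Basis by blast
  define a' where "a' i = (if i < m then a i else 0)" for i
  define w' where "w' i = (if i < m then w i else e)" for i
  define b' where "b' i = (if i < m then b i else c1)" for i
  have "\<forall>i<n. norm (w' i) = 1 \<and> b' i \<in> {c1..c2}"
    using wb e c by (auto simp: w'_def b'_def)
  moreover have "\<psi> = (\<lambda>x. \<Sum>i<n. a' i * relu_pow k (w' i \<bullet> x + b' i))"
  proof
    fix x
    have "(\<Sum>i<n. a' i * relu_pow k (w' i \<bullet> x + b' i)) = (\<Sum>i<m. a' i * relu_pow k (w' i \<bullet> x + b' i))"
      by (rule sum.mono_neutral_right) (use mn in \<open>auto simp: a'_def\<close>)
    also have "\<dots> = (\<Sum>i<m. a i * relu_pow k (w i \<bullet> x + b i))"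
      by (rule sum.cong) (auto simp: a'_def w'_def b'_def)
    finally show "\<psi> x = (\<Sum>i<n. a' i * relu_pow k (w' i \<bullet> x + b' i))" using \<psi> by simp
  qed
  ultimately show "\<psi> \<in> relu_nets k c1 c2 n" unfolding relu_nets_def by blast
qed

lemma nets_cont:
  assumes "\<psi> \<in> relu_nets k c1 c2 n"
  shows "continuous_on UNIV (\<psi> :: 'a::euclidean_space \<Rightarrow> real)"
proof -
  from assms obtain a w b where \<psi>: "\<psi> = (\<lambda>x. \<Sum>i<n. a i * relu_pow k (w i \<bullet> x + b i))"
    unfolding relu_nets_def by blast
  show ?thesis unfolding \<psi> relu_pow_def by (intro continuous_intros)
qed

lemma nets_L2:
  assumes \<Omega>: "open \<Omega>" "bounded \<Omega>" and \<psi>: "\<psi> \<in> relu_nets k c1 c2 n"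
  shows "L2_fun \<Omega> (\<psi> :: 'a::euclidean_space \<Rightarrow> real)"
proof -
  interpret finite_measure "lebesgue_on \<Omega>" by (rule finite_lebesgue_on[OF \<Omega>])
  have c: "continuous_on UNIV \<psi>" by (rule nets_cont[OF \<psi>])
  have m: "\<psi> \<in> borel_measurable (lebesgue_on \<Omega>)"
    by (rule continuous_imp_measurable_on_sets_lebesgue[OF continuous_on_subset[OF c] open_sets_lebesgue[OF \<Omega>(1)]]) simp
  have "compact (\<psi> ` closure \<Omega>)"
    by (rule compact_continuous_image[OF continuous_on_subset[OF c]]) (use \<Omega> in auto)
  then obtain B where B: "\<And>y. y \<in> \<psi> ` closure \<Omega> \<Longrightarrow> norm y \<le> B"
    using compact_imp_bounded bounded_iff by metis
  have "integrable (lebesgue_on \<Omega>) (\<lambda>x. (\<psi> x)\<^sup>2)"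
  proof (rule integrable_const_bound[where B="B\<^sup>2"])
    show "AE x in lebesgue_on \<Omega>. norm ((\<psi> x)\<^sup>2) \<le> B\<^sup>2"
    proof (rule AE_I2)
      fix x assume "x \<in> space (lebesgue_on \<Omega>)"
      then have "x \<in> closure \<Omega>" using closure_subset by (auto simp: space_restrict_space)
      then have "\<bar>\<psi> x\<bar> \<le> B" using B by force
      then show "norm ((\<psi> x)\<^sup>2) \<le> B\<^sup>2"
        by (metis abs_ge_zero norm_ge_zero order.trans power_mono real_norm_def power2_abs norm_power)
    qed
    show "(\<lambda>x. (\<psi> x)\<^sup>2) \<in> borel_measurable (lebesgue_on \<Omega>)" using m by measurable
  qed
  then show ?thesis using m unfolding L2_fun_def by blast
qed

lemma sq_norm_real: "(norm (r::real))\<^sup>2 = r\<^sup>2" by simp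

lemma H1_tri:
  fixes v l \<psi> :: "'a::euclidean_space \<Rightarrow> real"
  assumes \<Omega>: "open \<Omega>" "bounded \<Omega>" and v: "v \<in> H1 \<Omega>" and l: "l \<in> H1 \<Omega>" and \<psi>: "L2_fun \<Omega> \<psi>"
  shows "H1_norm \<Omega> (\<lambda>x. v x - \<psi> x) \<le> H1_norm \<Omega> (\<lambda>x. v x - l x) + H1_norm \<Omega> (\<lambda>x. l x - \<psi> x)"
proof -
  define a where "a = (\<lambda>x. v x - l x)"
  define b where "b = (\<lambda>x. l x - \<psi> x)"
  define s where "s = (\<lambda>x. v x - \<psi> x)"
  have s_ab: "s = (\<lambda>x. a x + b x)" unfolding s_def a_def b_def by auto
  have aH: "a \<in> H1 \<Omega>" unfolding a_def by (rule H1_diff[OF v l])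
  define ga where "ga = wgrad \<Omega> a"
  have ga: "L2_vec \<Omega> ga" "weak_grad \<Omega> a ga" using wgrad_spec[OF aH] ga_def by auto
  have aL: "L2_fun \<Omega> a" using aH unfolding H1_def by blast
  have lL: "L2_fun \<Omega> l" using l unfolding H1_def by blast
  have bL: "L2_fun \<Omega> b" unfolding b_def by (rule L2_fun_diff[OF lL \<psi>])
  have sL: "L2_fun \<Omega> s" unfolding s_ab by (rule L2_fun_add[OF aL bL])
  define M where "M = (lebesgue_on \<Omega>)"
  have mink_ab: "sqrt (\<integral>x. (s x)\<^sup>2 \<partial>M) \<le> sqrt (\<integral>x. (a x)\<^sup>2 \<partial>M) + sqrt (\<integral>x. (b x)\<^sup>2 \<partial>M)"
    using minkowski_L2(2)[of a M b] aL bL unfolding s_ab L2_fun_def M_def by simp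
  have Ha: "H1_norm \<Omega> a = sqrt ((\<integral>x. (a x)\<^sup>2 \<partial>M) + (\<integral>x. (norm (ga x))\<^sup>2 \<partial>M))"
    unfolding H1_norm_def ga_def M_def ..
  have nn: "\<And>f :: 'a \<Rightarrow> real. (\<integral>x. (f x)\<^sup>2 \<partial>M) \<ge> 0" by simp
  have nnv: "\<And>f :: 'a \<Rightarrow> 'a. (\<integral>x. (norm (f x))\<^sup>2 \<partial>M) \<ge> 0" by simp
  have sq: "\<And>r. r \<ge> 0 \<Longrightarrow> (sqrt r)\<^sup>2 = r" by simp
  show ?thesis
  proof (cases "b \<in> H1 \<Omega>")
    case True
    define gb where "gb = wgrad \<Omega> b"
    have gb: "L2_vec \<Omega> gb" "weak_grad \<Omega> b gb" using wgrad_spec[OF True] gb_def by auto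
    have gs: "L2_vec \<Omega> (\<lambda>x. ga x + gb x)" "weak_grad \<Omega> s (\<lambda>x. ga x + gb x)"
      using L2_vec_add[OF ga(1) gb(1)] weak_grad_add[OF ga(2) gb(2)] s_ab by auto
    have Hs: "H1_norm \<Omega> s = sqrt ((\<integral>x. (s x)\<^sup>2 \<partial>M) + (\<integral>x. (norm (ga x + gb x))\<^sup>2 \<partial>M))"
      using H1_norm_eq[OF \<Omega> gs] M_def by simp
    have Hb: "H1_norm \<Omega> b = sqrt ((\<integral>x. (b x)\<^sup>2 \<partial>M) + (\<integral>x. (norm (gb x))\<^sup>2 \<partial>M))"
      unfolding H1_norm_def gb_def M_def ..
    have mink_g: "sqrt (\<integral>x. (norm (ga x + gb x))\<^sup>2 \<partial>M) \<le> sqrt (\<integral>x. (norm (ga x))\<^sup>2 \<partial>M) + sqrt (\<integral>x. (norm (gb x))\<^sup>2 \<partial>M)"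
      using minkowski_L2(2)[of ga M gb] ga(1) gb(1) unfolding L2_vec_def M_def by simp
    have "sqrt ((sqrt (\<integral>x. (s x)\<^sup>2 \<partial>M))\<^sup>2 + (sqrt (\<integral>x. (norm (ga x + gb x))\<^sup>2 \<partial>M))\<^sup>2)
      \<le> sqrt ((sqrt (\<integral>x. (a x)\<^sup>2 \<partial>M))\<^sup>2 + (sqrt (\<integral>x. (norm (ga x))\<^sup>2 \<partial>M))\<^sup>2)
       + sqrt ((sqrt (\<integral>x. (b x)\<^sup>2 \<partial>M))\<^sup>2 + (sqrt (\<integral>x. (norm (gb x))\<^sup>2 \<partial>M))\<^sup>2)"
      by (rule sqrt2_tri[OF _ mink_ab _ mink_g]) auto
    then have "H1_norm \<Omega> s \<le> H1_norm \<Omega> a + H1_norm \<Omega> b"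
      unfolding Hs Ha Hb by (simp only: sq nn nnv)
    then show ?thesis unfolding s_def a_def b_def .
  next
    case False
    have sH: "s \<notin> H1 \<Omega>"
    proof
      assume "s \<in> H1 \<Omega>"
      then have "(\<lambda>x. s x - a x) \<in> H1 \<Omega>" using H1_diff aH by blast
      moreover have "(\<lambda>x. s x - a x) = b" unfolding s_def a_def b_def by auto
      ultimately show False using False by simp
    qed
    have "wgrad \<Omega> s = wgrad \<Omega> b"
    proof -
      have "(\<lambda>g. L2_vec \<Omega> g \<and> weak_grad \<Omega> s g) = (\<lambda>g. L2_vec \<Omega> g \<and> weak_grad \<Omega> b g)"
        using sH False sL bL unfolding H1_def by auto
      then show ?thesis unfolding wgrad_def by simp
    qed
    define G where "G = (\<integral>x. (norm (wgrad \<Omega> b x))\<^sup>2 \<partial>M)"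
    have G0: "G \<ge> 0" unfolding G_def by simp
    have Hs: "H1_norm \<Omega> s = sqrt ((\<integral>x. (s x)\<^sup>2 \<partial>M) + G)"
      unfolding H1_norm_def G_def M_def \<open>wgrad \<Omega> s = wgrad \<Omega> b\<close> ..
    have Hb: "H1_norm \<Omega> b = sqrt ((\<integral>x. (b x)\<^sup>2 \<partial>M) + G)"
      unfolding H1_norm_def G_def M_def ..
    have "sqrt ((sqrt (\<integral>x. (s x)\<^sup>2 \<partial>M))\<^sup>2 + (sqrt G)\<^sup>2)
      \<le> sqrt ((sqrt (\<integral>x. (a x)\<^sup>2 \<partial>M))\<^sup>2 + (sqrt (\<integral>x. (norm (ga x))\<^sup>2 \<partial>M))\<^sup>2)
       + sqrt ((sqrt (\<integral>x. (b x)\<^sup>2 \<partial>M))\<^sup>2 + (sqrt G)\<^sup>2)"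
      by (rule sqrt2_tri[OF _ mink_ab]) (use G0 in auto)
    then have "H1_norm \<Omega> s \<le> H1_norm \<Omega> a + H1_norm \<Omega> b"
      unfolding Hs Ha Hb using G0 by (simp only: sq nn nnv)
    then show ?thesis unfolding s_def a_def b_def .
  qed
qed



theorem lemma4:
  fixes \<Omega> :: "'a::euclidean_space set" and k :: nat and c1 c2 :: real
    and V :: "('a \<Rightarrow> real) set"
  assumes dom: "open \<Omega>" "connected \<Omega>" "bounded \<Omega>" "\<Omega> \<noteq> {}"
    and k: "k \<ge> 1"
    and c12: "c1 < c2"
      "c1 < Inf {w \<bullet> x | w x. norm w = 1 \<and> x \<in> \<Omega>}"
      "Sup {w \<bullet> x | w x. norm w = 1 \<and> x \<in> \<Omega>} < c2"
    and dense: "\<And>u \<epsilon>. u \<in> H1 \<Omega> \<Longrightarrow> \<epsilon> > 0 \<Longrightarrow>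
       \<exists>n. \<exists>\<psi>\<in>relu_nets k c1 c2 n. H1_norm \<Omega> (\<lambda>x. u x - \<psi> x) \<le> \<epsilon>"
    and V: "H1_compact \<Omega> V"
  shows "\<forall>\<epsilon>>0. \<exists>n0. \<forall>v\<in>V. \<forall>n>n0.
           \<exists>\<psi>\<in>relu_nets k c1 c2 n. H1_norm \<Omega> (\<lambda>x. v x - \<psi> x) \<le> \<epsilon>"
proof (intro allI impI)
  fix \<epsilon> :: real assume \<epsilon>: "\<epsilon> > 0"
  show "\<exists>n0. \<forall>v\<in>V. \<forall>n>n0. \<exists>\<psi>\<in>relu_nets k c1 c2 n. H1_norm \<Omega> (\<lambda>x. v x - \<psi> x) \<le> \<epsilon>"
  proof (rule ccontr)
    assume "\<not> ?thesis"
    then have "\<forall>j. \<exists>v n. v \<in> V \<and> n > j \<and> (\<forall>\<psi>\<in>relu_nets k c1 c2 n. \<not> H1_norm \<Omega> (\<lambda>x. v x - \<psi> x) \<le> \<epsilon>)"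
      by blast
    then obtain s N where sN: "\<And>j. s j \<in> V" "\<And>j. N j > j"
      "\<And>j \<psi>. \<psi> \<in> relu_nets k c1 c2 (N j) \<Longrightarrow> \<not> H1_norm \<Omega> (\<lambda>x. s j x - \<psi> x) \<le> \<epsilon>"
      by metis
    have VH: "V \<subseteq> H1 \<Omega>" using V unfolding H1_compact_def by blast
    from V sN(1) obtain l r where l: "l \<in> V" and r: "strict_mono r"
      and lim: "(\<lambda>n. H1_norm \<Omega> (\<lambda>x. s (r n) x - l x)) \<longlonglongrightarrow> 0"
      unfolding H1_compact_def by blast
    have e2: "\<epsilon> / 2 > 0" using \<epsilon> by simp
    obtain M \<psi> where \<psi>: "\<psi> \<in> relu_nets k c1 c2 M" and l\<psi>: "H1_norm \<Omega> (\<lambda>x. l x - \<psi> x) \<le> \<epsilon> / 2"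
      using dense[OF subsetD[OF VH l] e2] by blast
    from order_tendstoD(2)[OF lim e2] obtain J where
      J: "\<And>j. j \<ge> J \<Longrightarrow> H1_norm \<Omega> (\<lambda>x. s (r j) x - l x) < \<epsilon> / 2"
      unfolding eventually_sequentially by blast
    define j where "j = max J M"
    have "M \<le> r j" using seq_suble[OF r, of j] unfolding j_def by linarith
    then have "M \<le> N (r j)" using sN(2)[of "r j"] by linarith
    then have \<psi>N: "\<psi> \<in> relu_nets k c1 c2 (N (r j))"
      using nets_mono[of c1 c2 M "N (r j)" k] c12(1) \<psi> by auto
    have "H1_norm \<Omega> (\<lambda>x. s (r j) x - \<psi> x) \<le> H1_norm \<Omega> (\<lambda>x. s (r j) x - l x) + H1_norm \<Omega> (\<lambda>x. l x - \<psi> x)"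
      by (rule H1_tri[OF dom(1) dom(3) subsetD[OF VH sN(1)] subsetD[OF VH l] nets_L2[OF dom(1) dom(3) \<psi>]])
    also have "\<dots> < \<epsilon>" using J[of j] l\<psi> unfolding j_def by simp
    finally show False using sN(3)[OF \<psi>N] by simp
  qed
qed


end
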